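(* Let $P$ be the set of $n\geq 3$ points equally spaced on the unit circle. Every $t$-spanner on $P$ with $t<2$ that has tree-width $2$ is plane.
   Context: A $t$-spanner on $P$ is a graph with vertex set $P$, edges weighted by Euclidean distance, such that for all $p\neq p'\in P$ the shortest-path distance between $p$ and $p'$ is at most $t$ times their Euclidean distance. Plane means the straight-line drawing with vertices at the points of $P$ has no edge crossings. *)

theory Defs
  imports "HOL-Analysis.Analysis"
begin

text \<open>Geometric graphs in the plane, with the plane modelled as the complex numbers
  (so dist is the Euclidean distance).\<close>

definition graph_on :: "'a set \<Rightarrow> 'a set set \<Rightarrow> bool" where
  "graph_on V E \<longleftrightarrow> (\<forall>e\<in>E. e \<subseteq> V \<and> card e = 2)"

definition is_walk :: "'a set set \<Rightarrow> 'a \<Rightarrow> 'a \<Rightarrow> 'a list \<Rightarrow> bool" where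
  "is_walk E p q ps \<longleftrightarrow> ps \<noteq> [] \<and> hd ps = p \<and> last ps = q \<and>
     (\<forall>i < length ps - 1. {ps ! i, ps ! Suc i} \<in> E)"

definition walk_length :: "complex list \<Rightarrow> real" where
  "walk_length ps = (\<Sum>i < length ps - 1. dist (ps ! i) (ps ! Suc i))"

text \<open>t-spanner: for all distinct p, p' in P the shortest-path distance is at most
  t times the Euclidean distance. In a finite graph with positive edge weights the
  shortest-path distance is attained by some walk, so this is equivalent to the
  existence of a walk of length at most t |p p'|.\<close>
definition t_spanner :: "real \<Rightarrow> complex set \<Rightarrow> complex set set \<Rightarrow> bool" where
  "t_spanner t P E \<longleftrightarrow> graph_on P E \<and>
     (\<forall>p\<in>P. \<forall>p'\<in>P. p \<noteq> p' \<longrightarrow>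
        (\<exists>ps. is_walk E p p' ps \<and> walk_length ps \<le> t * dist p p'))"

definition plane :: "complex set set \<Rightarrow> bool" where
  "plane E \<longleftrightarrow> (\<forall>a b c d. {a, b} \<in> E \<longrightarrow> {c, d} \<in> E \<longrightarrow> {a, b} \<noteq> {c, d} \<longrightarrow>
      closed_segment a b \<inter> closed_segment c d \<subseteq> {a, b} \<inter> {c, d})"

definition ug_connected :: "'b set \<Rightarrow> 'b set set \<Rightarrow> bool" where
  "ug_connected I TE \<longleftrightarrow>
     (\<forall>i\<in>I. \<forall>j\<in>I. (i, j) \<in> {(a, b). {a, b} \<in> TE \<and> a \<in> I \<and> b \<in> I}\<^sup>*)"

definition is_tree :: "nat set \<Rightarrow> nat set set \<Rightarrow> bool" where
  "is_tree I TE \<longleftrightarrow> finite I \<and> I \<noteq> {} \<and> graph_on I TE \<and> ug_connected I TE \<and>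
     card TE = card I - 1"

definition tree_decomposition ::
    "'a set \<Rightarrow> 'a set set \<Rightarrow> nat set \<Rightarrow> nat set set \<Rightarrow> (nat \<Rightarrow> 'a set) \<Rightarrow> bool" where
  "tree_decomposition V E I TE B \<longleftrightarrow> is_tree I TE \<and>
     (\<forall>i\<in>I. B i \<subseteq> V) \<and> (\<Union>i\<in>I. B i) = V \<and>
     (\<forall>e\<in>E. \<exists>i\<in>I. e \<subseteq> B i) \<and>
     (\<forall>v\<in>V. ug_connected {i\<in>I. v \<in> B i} {e\<in>TE. e \<subseteq> {i\<in>I. v \<in> B i}})"

definition td_width :: "nat set \<Rightarrow> (nat \<Rightarrow> 'a set) \<Rightarrow> nat" where
  "td_width I B = Max ((\<lambda>i. card (B i)) ` I) - 1"

definition treewidth :: "'a set \<Rightarrow> 'a set set \<Rightarrow> nat" where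
  "treewidth V E = (LEAST w. \<exists>I TE B. tree_decomposition V E I TE B \<and> td_width I B = w)"

end

theory Submission
  imports Defs
begin

definition ur :: "'b set \<Rightarrow> 'b set set \<Rightarrow> ('b \<times> 'b) set" where
  "ur S TE = {(a,b). {a,b} \<in> TE \<and> a \<in> S \<and> b \<in> S}"

lemma ugc_def2: "ug_connected S TE \<longleftrightarrow> (\<forall>i\<in>S. \<forall>j\<in>S. (i,j) \<in> (ur S TE)\<^sup>*)"
  by (simp add: ug_connected_def ur_def)

lemma ur_sym: "(ur S TE)\<inverse> = ur S TE"
  by (auto simp: ur_def insert_commute)

lemma ur_rtrancl_sym: "(x,y) \<in> (ur S TE)\<^sup>* \<Longrightarrow> (y,x) \<in> (ur S TE)\<^sup>*"
  by (metis rtrancl_converseI ur_sym)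

lemma ur_mono: "S \<subseteq> S' \<Longrightarrow> TE \<subseteq> TE' \<Longrightarrow> ur S TE \<subseteq> ur S' TE'"
  by (auto simp: ur_def)

definition leaf :: "'b set set \<Rightarrow> 'b \<Rightarrow> 'b \<Rightarrow> bool" where
  "leaf TE l q \<longleftrightarrow> {l,q} \<in> TE \<and> (\<forall>e\<in>TE. l \<in> e \<longrightarrow> e = {l,q})"

lemma graph_on_neq: "graph_on I TE \<Longrightarrow> {a,b} \<in> TE \<Longrightarrow> a \<noteq> b"
  unfolding graph_on_def by fastforce

lemma leaf_edge: "graph_on I TE \<Longrightarrow> leaf TE l q \<Longrightarrow> {l,y} \<in> TE \<Longrightarrow> y = q"
  unfolding leaf_def using graph_on_neq
  by (metis doubleton_eq_iff insertI1)

lemma leaf_nbr_in: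
  assumes "graph_on I TE" "leaf TE l q" "ug_connected S TE" "l \<in> S" "x \<in> S" "x \<noteq> l"
  shows "q \<in> S"
proof -
  have "(l,x) \<in> (ur S TE)\<^sup>*" using assms ugc_def2 by metis
  then obtain y where "(l,y) \<in> ur S TE" using assms(6)
    by (metis converse_rtranclE)
  then have "{l,y} \<in> TE" "y \<in> S" by (auto simp: ur_def)
  then show ?thesis using leaf_edge assms by metis
qed

lemma leaf_remove_conn:
  assumes g: "graph_on I TE" and lf: "leaf TE l q" and c: "ug_connected S TE"
  shows "ug_connected (S - {l}) TE"
  unfolding ugc_def2
proof (intro ballI)
  fix x y assume x: "x \<in> S - {l}" and y: "y \<in> S - {l}"
  have "(x,y) \<in> (ur S TE)\<^sup>*" using c x y unfolding ugc_def2 by blast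
  then have "(y \<noteq> l \<longrightarrow> (x,y) \<in> (ur (S - {l}) TE)\<^sup>*) \<and>
             (y = l \<longrightarrow> q \<in> S \<and> q \<noteq> l \<and> (x,q) \<in> (ur (S - {l}) TE)\<^sup>*)"
  proof (induction rule: rtrancl_induct)
    case base
    then show ?case using x by simp
  next
    case (step z w)
    have e: "{z,w} \<in> TE" "z \<in> S" "w \<in> S" using step(2) by (auto simp: ur_def)
    have zw: "z \<noteq> w" using graph_on_neq[OF g e(1)] .
    show ?case
    proof (cases "z = l")
      case True
      then have wq: "w = q" using leaf_edge[OF g lf] e by auto
      have wl: "w \<noteq> l" using True zw by simp
      have "(x,q) \<in> (ur (S - {l}) TE)\<^sup>*" using step(3) True by simp
      then show ?thesis using wq wl by simp
    next
      case False
      note zl = False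
      show ?thesis
      proof (cases "w = l")
        case True
        then have "{l,z} \<in> TE" using e(1) by (simp add: insert_commute)
        then have zq: "z = q" using leaf_edge[OF g lf] by blast
        have "(x,z) \<in> (ur (S - {l}) TE)\<^sup>*" using step(3) zl by simp
        then show ?thesis using True zq zl e(2) by simp
      next
        case False
        have "(z,w) \<in> ur (S - {l}) TE" using e zl False by (simp add: ur_def)
        moreover have "(x,z) \<in> (ur (S - {l}) TE)\<^sup>*" using step(3) zl by simp
        ultimately show ?thesis using False by simp
      qed
    qed
  qed
  then show "(x,y) \<in> (ur (S - {l}) TE)\<^sup>*" using y by simp
qed

lemma ur_remove_leaf_edge: "ur (S - {l}) TE = ur (S - {l}) (TE - {{l,q}})"
proof -
  have ne: "{a,b} \<noteq> {l,q}" if "a \<noteq> l" "b \<noteq> l" for a b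
  proof
    assume "{a,b} = {l,q}"
    then have "l \<in> {a,b}" by simp
    then show False using that by simp
  qed
  show ?thesis unfolding ur_def
  proof (intro set_eqI iffI)
    fix x assume "x \<in> {(a, b). {a, b} \<in> TE \<and> a \<in> S - {l} \<and> b \<in> S - {l}}"
    then obtain a b where "x = (a,b)" "{a, b} \<in> TE" "a \<in> S - {l}" "b \<in> S - {l}" by blast
    then show "x \<in> {(a, b). {a, b} \<in> TE - {{l,q}} \<and> a \<in> S - {l} \<and> b \<in> S - {l}}"
      using ne by simp
  qed auto
qed

lemma leaf_exists:
  assumes t: "is_tree I TE" and c2: "2 \<le> card I"
  shows "\<exists>l q. leaf TE l q"
proof -
  have fI: "finite I" and g: "graph_on I TE" and conn: "ug_connected I TE"
    and cE: "card TE = card I - 1" using t by (auto simp: is_tree_def)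
  have sub: "TE \<subseteq> Pow I" using g by (auto simp: graph_on_def)
  then have fE: "finite TE" using fI by (meson finite_Pow_iff finite_subset)
  define d where "d v = card {e\<in>TE. v \<in> e}" for v
  have "(\<Sum>v\<in>I. d v) = (\<Sum>v\<in>I. \<Sum>e\<in>TE. if v \<in> e then 1 else 0)"
    unfolding d_def using fE by (simp add: sum.inter_filter[symmetric])
  also have "\<dots> = (\<Sum>e\<in>TE. \<Sum>v\<in>I. if v \<in> e then 1 else 0)" by (rule sum.swap)
  also have "\<dots> = (\<Sum>e\<in>TE. card {v\<in>I. v \<in> e})"
    using fI by (simp add: sum.inter_filter[symmetric])
  also have "\<dots> = (\<Sum>e\<in>TE. 2)"
  proof (rule sum.cong)
    fix e assume "e \<in> TE"
    then have "{v\<in>I. v \<in> e} = e" "card e = 2" using g by (auto simp: graph_on_def)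
    then show "card {v\<in>I. v \<in> e} = 2" by simp
  qed simp
  finally have dsum: "(\<Sum>v\<in>I. d v) = 2 * card TE" by simp
  have d1: "d v \<ge> 1" if v: "v \<in> I" for v
  proof -
    obtain w where w: "w \<in> I" "w \<noteq> v" using c2 v
      by (metis One_nat_def card.infinite card_le_Suc0_iff_eq not_less_eq_eq numeral_2_eq_2 zero_le)
    have "(v,w) \<in> (ur I TE)\<^sup>*" using conn v w unfolding ugc_def2 by blast
    then obtain y where "(v,y) \<in> ur I TE" using w by (metis converse_rtranclE)
    then have "{v,y} \<in> {e\<in>TE. v \<in> e}" by (auto simp: ur_def)
    then show ?thesis unfolding d_def using fE
      by (metis (no_types, lifting) One_nat_def Suc_leI card_gt_0_iff empty_iff finite_subset mem_Collect_eq subsetI)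
  qed
  have "\<exists>v\<in>I. d v \<le> 1"
  proof (rule ccontr)
    assume "\<not> ?thesis"
    then have "\<forall>v\<in>I. 2 \<le> d v" by auto
    then have "(\<Sum>v\<in>I. 2) \<le> (\<Sum>v\<in>I. d v)" by (meson sum_mono)
    then have "2 * card I \<le> 2 * card TE" using dsum by simp
    then show False using cE c2 by simp
  qed
  then obtain v where v: "v \<in> I" "d v = 1" using d1 by force
  then obtain e0 where e0: "{e\<in>TE. v \<in> e} = {e0}" unfolding d_def by (metis card_1_singletonE)
  then have "e0 \<in> TE" "v \<in> e0" by auto
  then have "card e0 = 2" using g by (auto simp: graph_on_def)
  then obtain x y where xy: "e0 = {x,y}" "x \<noteq> y" by (meson card_2_iff)
  then obtain q where q: "e0 = {v,q}" using \<open>v \<in> e0\<close> by (metis empty_iff insert_commute insert_iff)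
  have "leaf TE v q" unfolding leaf_def
    using e0 q \<open>e0 \<in> TE\<close> by blast
  then show ?thesis by blast
qed

lemma tree_remove_leaf:
  assumes t: "is_tree I TE" and lf: "leaf TE l q" and c2: "2 \<le> card I"
  shows "is_tree (I - {l}) (TE - {{l,q}})" "l \<in> I" "q \<in> I" "l \<noteq> q"
proof -
  have fI: "finite I" and g: "graph_on I TE" and conn: "ug_connected I TE"
    and cE: "card TE = card I - 1" using t by (auto simp: is_tree_def)
  have lqE: "{l,q} \<in> TE" using lf by (simp add: leaf_def)
  then show lI: "l \<in> I" and "q \<in> I" using g by (auto simp: graph_on_def)
  show lq: "l \<noteq> q" using graph_on_neq[OF g lqE] .
  have "graph_on (I - {l}) (TE - {{l,q}})"
    unfolding graph_on_def
  proof
    fix e assume e: "e \<in> TE - {{l,q}}"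
    then have "l \<notin> e" using lf unfolding leaf_def by blast
    then show "e \<subseteq> I - {l} \<and> card e = 2" using e g unfolding graph_on_def by blast
  qed
  moreover have "ug_connected (I - {l}) (TE - {{l,q}})"
    using leaf_remove_conn[OF g lf conn] by (simp add: ugc_def2 ur_remove_leaf_edge[of I l TE q])
  moreover have "card (TE - {{l,q}}) = card (I - {l}) - 1"
    using cE lqE lI fI by (simp add: card_Diff_singleton)
  moreover have "I - {l} \<noteq> {}" using c2 lI fI \<open>q \<in> I\<close> lq by blast
  ultimately show "is_tree (I - {l}) (TE - {{l,q}})" using fI by (simp add: is_tree_def)
qed

lemma helly:
  assumes "is_tree I TE" "\<forall>S\<in>F. S \<subseteq> I \<and> S \<noteq> {} \<and> ug_connected S TE"
    "\<forall>S\<in>F. \<forall>S'\<in>F. S \<inter> S' \<noteq> {}"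
  shows "\<exists>x\<in>I. \<forall>S\<in>F. x \<in> S"
  using assms
proof (induction "card I" arbitrary: I TE F rule: less_induct)
  case less
  have fI: "finite I" "I \<noteq> {}" and g: "graph_on I TE" using less.prems(1) by (auto simp: is_tree_def)
  show ?case
  proof (cases "card I \<le> 1")
    case True
    then obtain x where "I = {x}" using fI
      by (metis card_0_eq card_1_singletonE le_SucE One_nat_def le_zero_eq)
    then show ?thesis using less.prems(2) by auto
  next
    case False
    then have c2: "2 \<le> card I" by simp
    obtain l q where lf: "leaf TE l q" using leaf_exists[OF less.prems(1) c2] by blast
    note tr = tree_remove_leaf[OF less.prems(1) lf c2]
    show ?thesis
    proof (cases "\<exists>S\<in>F. S = {l}")
      case True
      then have "\<forall>S\<in>F. l \<in> S" using less.prems(3) by blast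
      then show ?thesis using tr(2) by blast
    next
      case False
      define F' where "F' = (\<lambda>S. S - {l}) ` F"
      have A: "\<forall>S\<in>F'. S \<subseteq> I - {l} \<and> S \<noteq> {} \<and> ug_connected S (TE - {{l,q}})"
      proof
        fix S' assume "S' \<in> F'"
        then obtain S where S: "S \<in> F" "S' = S - {l}" unfolding F'_def by blast
        have "S \<subseteq> I" "S \<noteq> {}" "ug_connected S TE" using S less.prems(2) by auto
        moreover have "S \<noteq> {l}" using False S by blast
        ultimately show "S' \<subseteq> I - {l} \<and> S' \<noteq> {} \<and> ug_connected S' (TE - {{l,q}})"
          using S leaf_remove_conn[OF g lf, of S] ur_remove_leaf_edge[of S l TE q]
          by (auto simp: ugc_def2)
      qed
      have B: "\<forall>S\<in>F'. \<forall>S'\<in>F'. S \<inter> S' \<noteq> {}"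
      proof (intro ballI)
        fix A' B' assume "A' \<in> F'" "B' \<in> F'"
        then obtain A B where AB: "A \<in> F" "B \<in> F" "A' = A - {l}" "B' = B - {l}"
          unfolding F'_def by blast
        have pa: "A \<noteq> {}" "A \<noteq> {l}" "ug_connected A TE" "B \<noteq> {}" "B \<noteq> {l}" "ug_connected B TE"
          using AB less.prems(2) False by auto
        show "A' \<inter> B' \<noteq> {}"
        proof (cases "l \<in> A \<inter> B")
          case True
          have "q \<in> A" using pa(1,2,3) True leaf_nbr_in[OF g lf pa(3)] by blast
          moreover have "q \<in> B" using pa(4,5,6) True leaf_nbr_in[OF g lf pa(6)] by blast
          ultimately show ?thesis using AB tr(4) by blast
        next
          case False
          then show ?thesis using less.prems(3) AB by blast
        qed
      qed
      have C: "card (I - {l}) < card I" using tr(2) fI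
        by (meson card_Diff1_less)
      have "\<exists>x\<in>I - {l}. \<forall>S\<in>F'. x \<in> S" by (rule less.hyps[OF C tr(1) A B])
      then obtain x where "x \<in> I - {l}" "\<forall>S\<in>F'. x \<in> S" by blast
      then show ?thesis unfolding F'_def by blast
    qed
  qed
qed

lemma td_conn:
  assumes td: "tree_decomposition V E I TE B" and XV: "X \<subseteq> V" and cX: "ug_connected X E"
  shows "ug_connected {i\<in>I. B i \<inter> X \<noteq> {}} TE"
proof -
  define S where "S = {i\<in>I. B i \<inter> X \<noteq> {}}"
  have vc: "\<forall>v\<in>V. ug_connected {i\<in>I. v \<in> B i} {e\<in>TE. e \<subseteq> {i\<in>I. v \<in> B i}}"
    and eb: "\<forall>e\<in>E. \<exists>i\<in>I. e \<subseteq> B i"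
    using td by (auto simp: tree_decomposition_def)
  have Tconn: "(i,j) \<in> (ur S TE)\<^sup>*"
    if v: "v \<in> X" and ij: "i \<in> I" "j \<in> I" "v \<in> B i" "v \<in> B j" for v i j
  proof -
    have "ug_connected {i\<in>I. v \<in> B i} {e\<in>TE. e \<subseteq> {i\<in>I. v \<in> B i}}"
      using vc v XV by blast
    then have "(i,j) \<in> (ur {i\<in>I. v \<in> B i} {e\<in>TE. e \<subseteq> {i\<in>I. v \<in> B i}})\<^sup>*"
      using ij unfolding ugc_def2 by blast
    moreover have "ur {i\<in>I. v \<in> B i} {e\<in>TE. e \<subseteq> {i\<in>I. v \<in> B i}} \<subseteq> ur S TE"
      using v unfolding S_def ur_def by blast
    ultimately show ?thesis by (meson rtrancl_mono subsetD)
  qed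
  have "(i,j) \<in> (ur S TE)\<^sup>*" if i: "i \<in> S" and j: "j \<in> S" for i j
  proof -
    obtain u where u: "u \<in> B i" "u \<in> X" using i unfolding S_def by blast
    obtain w where w: "w \<in> B j" "w \<in> X" using j unfolding S_def by blast
    have iI: "i \<in> I" "j \<in> I" using i j unfolding S_def by auto
    have "(u,w) \<in> (ur X E)\<^sup>*" using cX u w unfolding ugc_def2 by blast
    then have "\<forall>j. j \<in> I \<longrightarrow> w \<in> B j \<longrightarrow> (i,j) \<in> (ur S TE)\<^sup>*"
    proof (induction rule: rtrancl_induct)
      case base
      show ?case using Tconn u iI by blast
    next
      case (step y z)
      have yz: "{y,z} \<in> E" "y \<in> X" "z \<in> X" using step(2) by (auto simp: ur_def)
      obtain k where k: "k \<in> I" "{y,z} \<subseteq> B k" using eb yz(1) by blast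
      have ik: "(i,k) \<in> (ur S TE)\<^sup>*" using step(3) k by simp
      show ?case
      proof (intro allI impI)
        fix j assume "j \<in> I" "z \<in> B j"
        then have "(k,j) \<in> (ur S TE)\<^sup>*" using Tconn[of z k j] yz k by simp
        then show "(i,j) \<in> (ur S TE)\<^sup>*" using ik by (meson rtrancl_trans)
      qed
    qed
    then show ?thesis using w iI by blast
  qed
  then show ?thesis unfolding ugc_def2 S_def by blast
qed

lemma td_adj:
  assumes td: "tree_decomposition V E I TE B" and "{u,v} \<in> E" "u \<in> X" "v \<in> Y"
  shows "{i\<in>I. B i \<inter> X \<noteq> {}} \<inter> {i\<in>I. B i \<inter> Y \<noteq> {}} \<noteq> {}"
proof -
  have "\<forall>e\<in>E. \<exists>i\<in>I. e \<subseteq> B i" using td by (simp add: tree_decomposition_def)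
  then obtain i where "i \<in> I" "{u,v} \<subseteq> B i" using assms(2) by blast
  then show ?thesis using assms(3,4) by blast
qed

lemma td_ne:
  assumes td: "tree_decomposition V E I TE B" and "X \<subseteq> V" "X \<noteq> {}"
  shows "{i\<in>I. B i \<inter> X \<noteq> {}} \<noteq> {}"
proof -
  have "(\<Union>i\<in>I. B i) = V" using td by (simp add: tree_decomposition_def)
  then show ?thesis using assms(2,3) by blast
qed

lemma K4_bag:
  assumes fV: "finite V" and td: "tree_decomposition V E I TE B"
    and sub: "X1 \<subseteq> V" "X2 \<subseteq> V" "X3 \<subseteq> V" "X4 \<subseteq> V"
    and ne: "X1 \<noteq> {}" "X2 \<noteq> {}" "X3 \<noteq> {}" "X4 \<noteq> {}"
    and dis: "X1 \<inter> X2 = {}" "X1 \<inter> X3 = {}" "X1 \<inter> X4 = {}" "X2 \<inter> X3 = {}"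
      "X2 \<inter> X4 = {}" "X3 \<inter> X4 = {}"
    and con: "ug_connected X1 E" "ug_connected X2 E" "ug_connected X3 E" "ug_connected X4 E"
    and adj: "\<exists>u\<in>X1. \<exists>v\<in>X2. {u,v} \<in> E" "\<exists>u\<in>X1. \<exists>v\<in>X3. {u,v} \<in> E"
      "\<exists>u\<in>X1. \<exists>v\<in>X4. {u,v} \<in> E" "\<exists>u\<in>X2. \<exists>v\<in>X3. {u,v} \<in> E"
      "\<exists>u\<in>X2. \<exists>v\<in>X4. {u,v} \<in> E" "\<exists>u\<in>X3. \<exists>v\<in>X4. {u,v} \<in> E"
  shows "\<exists>i\<in>I. 4 \<le> card (B i)"
proof -
  define St where "St X = {i\<in>I. B i \<inter> X \<noteq> {}}" for X
  have tree: "is_tree I TE" using td by (simp add: tree_decomposition_def)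
  have A: "\<forall>S\<in>{St X1, St X2, St X3, St X4}. S \<subseteq> I \<and> S \<noteq> {} \<and> ug_connected S TE"
    using td_conn[OF td] td_ne[OF td] sub ne con unfolding St_def by auto
  have sym: "St X \<inter> St Y \<noteq> {}" if "\<exists>u\<in>X. \<exists>v\<in>Y. {u,v} \<in> E" for X Y
    using that td_adj[OF td] unfolding St_def by blast
  have "St X \<inter> St X \<noteq> {}" if "X \<subseteq> V" "X \<noteq> {}" for X
    using td_ne[OF td that] unfolding St_def by simp
  then have B: "\<forall>S\<in>{St X1, St X2, St X3, St X4}. \<forall>S'\<in>{St X1, St X2, St X3, St X4}. S \<inter> S' \<noteq> {}"
    using sym[OF adj(1)] sym[OF adj(2)] sym[OF adj(3)] sym[OF adj(4)] sym[OF adj(5)] sym[OF adj(6)]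
      sub ne by (auto simp: Int_commute)
  obtain x where x: "x \<in> I" "\<forall>S\<in>{St X1, St X2, St X3, St X4}. x \<in> S"
    using helly[OF tree A B] by blast
  then have "B x \<inter> X1 \<noteq> {}" "B x \<inter> X2 \<noteq> {}" "B x \<inter> X3 \<noteq> {}" "B x \<inter> X4 \<noteq> {}"
    unfolding St_def by auto
  then obtain u1 u2 u3 u4 where u: "u1 \<in> B x \<inter> X1" "u2 \<in> B x \<inter> X2" "u3 \<in> B x \<inter> X3" "u4 \<in> B x \<inter> X4"
    by blast
  have fB: "finite (B x)" using td x(1) fV unfolding tree_decomposition_def by (meson finite_subset)
  have "u1 \<noteq> u2" "u1 \<noteq> u3" "u1 \<noteq> u4" "u2 \<noteq> u3" "u2 \<noteq> u4" "u3 \<noteq> u4"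
    using u dis by blast+
  then have "card {u1,u2,u3,u4} = 4" by simp
  moreover have "card {u1,u2,u3,u4} \<le> card (B x)" using u fB by (intro card_mono) auto
  ultimately show ?thesis using x(1) by auto
qed

lemma td_trivial:
  assumes "graph_on V E"
  shows "tree_decomposition V E {0} {} (\<lambda>_. V)"
  using assms by (auto simp: tree_decomposition_def is_tree_def graph_on_def ug_connected_def)

lemma tw_ge3:
  assumes fV: "finite V" and g: "graph_on V E"
    and K: "\<And>I TE B. tree_decomposition V E I TE B \<Longrightarrow> \<exists>i\<in>I. 4 \<le> card (B i)"
  shows "treewidth V E \<noteq> 2"
proof
  assume tw: "treewidth V E = 2"
  have ex: "\<exists>w. \<exists>I TE B. tree_decomposition V E I TE B \<and> td_width I B = w"
    using td_trivial[OF g] by blast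
  have "\<exists>I TE B. tree_decomposition V E I TE B \<and> td_width I B = treewidth V E"
    unfolding treewidth_def using LeastI_ex[OF ex] .
  then obtain I TE B where td: "tree_decomposition V E I TE B" "td_width I B = 2"
    using tw by auto
  have fI: "finite I" using td(1) by (simp add: tree_decomposition_def is_tree_def)
  obtain i where i: "i \<in> I" "4 \<le> card (B i)" using K[OF td(1)] by blast
  have "card (B i) \<le> Max ((\<lambda>i. card (B i)) ` I)" using fI i(1) by simp
  then show False using td(2) i(2) unfolding td_width_def by linarith
qed

lemma dist_cis: "dist (cis x) (cis y) = 2 * \<bar>sin ((x - y) / 2)\<bar>"
proof -
  have "(dist (cis x) (cis y))^2 = (cos x - cos y)^2 + (sin x - sin y)^2"
    by (simp add: dist_norm cmod_def)
  also have "\<dots> = 2 - 2 * cos (x - y)"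
    by (simp add: power2_eq_square cos_diff algebra_simps)
  also have "cos (x - y) = 1 - 2 * (sin ((x - y)/2))^2"
  proof -
    have h: "2 * ((x-y)/2) = x - y" by simp
    show ?thesis using cos_double_sin[of "(x-y)/2"] unfolding h .
  qed
  finally have "(dist (cis x) (cis y))^2 = (2 * \<bar>sin ((x - y) / 2)\<bar>)^2"
    by (simp add: power_mult_distrib)
  then show ?thesis
    by (metis abs_ge_zero power2_eq_imp_eq zero_le_dist mult_nonneg_nonneg zero_le_numeral)
qed

lemma sin_lb:
  assumes "1 \<le> m" "m < n"
  shows "sin (pi / real n) \<le> sin (pi * real m / real n)"
proof -
  have n0: "real n > 0" using assms by simp
  show ?thesis
  proof (cases "2 * m \<le> n")
    case True
    have "pi * real m / real n \<le> pi / 2"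
      using True n0 by (simp add: field_simps)
    moreover have "pi / real n \<le> pi * real m / real n"
      using assms n0 by (simp add: divide_right_mono)
    moreover have "- (pi/2) \<le> pi / real n" using n0 by (smt (verit) divide_nonneg_pos pi_gt_zero)
    ultimately show ?thesis by (metis sin_monotone_2pi_le)
  next
    case False
    have e: "sin (pi * real m / real n) = sin (pi * real (n - m) / real n)"
    proof -
      have "pi * real (n - m) / real n = pi - pi * real m / real n"
        using assms n0 by (simp add: of_nat_diff field_simps)
      then show ?thesis by simp
    qed
    have "pi * real (n - m) / real n \<le> pi / 2"
      using False n0 by (simp add: field_simps of_nat_diff)
    moreover have "pi / real n \<le> pi * real (n - m) / real n"
      using assms n0 by (simp add: divide_right_mono)
    moreover have "- (pi/2) \<le> pi / real n" using n0 by (smt (verit) divide_nonneg_pos pi_gt_zero)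
    ultimately show ?thesis unfolding e by (metis sin_monotone_2pi_le)
  qed
qed

lemma sin_pos_frac:
  assumes "0 < m" "m < n"
  shows "sin (pi * real m / real n) > 0"
proof -
  have "real m < real n" "real n > 0" using assms by auto
  then have "pi * real m / real n < pi" by (simp add: field_simps)
  moreover have "pi * real m / real n > 0" using assms by simp
  ultimately show ?thesis by (simp add: sin_gt_zero)
qed

lemma trig_id: "sin (x::real) + sin y - sin (x + y) = 4 * sin (x/2) * sin (y/2) * sin ((x+y)/2)"
proof -
  define u where "u = x/2"
  define v where "v = y/2"
  have hx: "x = 2 * u" by (simp add: u_def)
  have hy: "y = 2 * v" by (simp add: v_def)
  have 1: "sin (x + y) = 2 * sin u * cos u * (1 - 2 * (sin v)^2) + (1 - 2 * (sin u)^2) * (2 * sin v * cos v)"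
    unfolding hx hy by (simp add: sin_add sin_double cos_double_sin)
  have 2: "sin ((x+y)/2) = sin u * cos v + cos u * sin v"
    unfolding u_def v_def by (simp add: sin_add[symmetric] add_divide_distrib)
  have 3: "sin x = 2 * sin u * cos u" "sin y = 2 * sin v * cos v"
    unfolding hx hy by (simp_all add: sin_double)
  have 4: "x/2 = u" "y/2 = v" by (simp_all add: u_def v_def)
  show ?thesis unfolding 1 2 3 4
    by (simp add: power2_eq_square algebra_simps)
qed

definition Lf :: "complex \<Rightarrow> complex \<Rightarrow> complex \<Rightarrow> real" where
  "Lf a b z = Im (cnj (b - a) * (z - a))"

lemma Lf_cis: "Lf (cis a) (cis b) (cis c) = sin (c - b) + sin (b - a) - sin (c - a)"
  by (simp add: Lf_def cos_diff sin_diff algebra_simps)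

lemma dist_pk: "dist (cis (th + 2*pi*real k/real n)) (cis (th + 2*pi*real k'/real n))
   = 2 * \<bar>sin (pi * (real k - real k') / real n)\<bar>"
proof -
  have "((th + 2*pi*real k/real n) - (th + 2*pi*real k'/real n)) / 2 = pi * (real k - real k') / real n"
    by (cases "n = 0") (simp_all add: field_simps)
  then show ?thesis by (simp add: dist_cis)
qed

lemma abs_sin_diff_ge:
  assumes "k < n" "k' < n" "k \<noteq> k'"
  shows "sin (pi / real n) \<le> \<bar>sin (pi * (real k - real k') / real n)\<bar>"
proof (cases "k < k'")
  case True
  have e: "pi * (real k - real k') / real n = - (pi * real (k' - k) / real n)"
    using True by (cases "n = 0") (simp_all add: of_nat_diff field_simps)
  have "0 < sin (pi * real (k' - k) / real n)" using True assms by (intro sin_pos_frac) auto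
  moreover have "sin (pi / real n) \<le> sin (pi * real (k' - k) / real n)"
    using True assms by (intro sin_lb) auto
  ultimately show ?thesis unfolding e by simp
next
  case False
  then have F: "k' < k" using assms by simp
  have e: "pi * (real k - real k') / real n = pi * real (k - k') / real n"
    using F by (cases "n = 0") (simp_all add: of_nat_diff field_simps)
  have "0 < sin (pi * real (k - k') / real n)" using F assms by (intro sin_pos_frac) auto
  moreover have "sin (pi / real n) \<le> sin (pi * real (k - k') / real n)"
    using F assms by (intro sin_lb) auto
  ultimately show ?thesis unfolding e by simp
qed

lemma sin_pi_n_pos: "2 \<le> n \<Longrightarrow> 0 < sin (pi / real n)"
  using sin_pos_frac[of 1 n] by simp

lemma adj_dist:
  assumes "k < n" "2 \<le> n"
  shows "dist (cis (th + 2*pi*real k/real n)) (cis (th + 2*pi*real ((k+1) mod n)/real n))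
        \<le> 2 * sin (pi / real n)"
proof (cases "k + 1 < n")
  case True
  then have "(k+1) mod n = k + 1" by simp
  then show ?thesis unfolding dist_pk using sin_pi_n_pos[OF assms(2)]
    by (simp add: field_simps)
next
  case False
  then have kn: "k + 1 = n" using assms by simp
  then have k: "k = n - 1" "(k+1) mod n = 0" by auto
  have "pi * (real k - real 0) / real n = pi - pi / real n"
    using assms k by (simp add: of_nat_diff field_simps)
  then show ?thesis unfolding dist_pk k(2) using sin_pi_n_pos[OF assms(2)]
    by simp
qed

lemma walk_lb:
  assumes g: "graph_on P E" and sep: "\<forall>x\<in>P. \<forall>y\<in>P. x \<noteq> y \<longrightarrow> s \<le> dist x y"
    and w: "is_walk E a b ps"
  shows "real (length ps - 1) * s \<le> walk_length ps"
proof -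
  have "s \<le> dist (ps!i) (ps!Suc i)" if "i < length ps - 1" for i
  proof -
    have e: "{ps!i, ps!Suc i} \<in> E" using that w by (simp add: is_walk_def)
    have "ps!i \<noteq> ps!Suc i" using graph_on_neq[OF g e] .
    moreover have "ps!i \<in> P" "ps!Suc i \<in> P" using g e unfolding graph_on_def by auto
    ultimately show ?thesis using sep by blast
  qed
  then have "(\<Sum>i < length ps - 1. s) \<le> walk_length ps"
    unfolding walk_length_def by (intro sum_mono) auto
  then show ?thesis by simp
qed

lemma cycle_edges:
  fixes p :: "nat \<Rightarrow> complex"
  assumes p: "p = (\<lambda>k. cis (th + 2*pi*real k/real n))" and P: "P = p ` {..<n}"
    and n: "2 \<le> n" and sp: "t_spanner t P E" and t: "t < 2" and k: "k < n"
  shows "{p k, p ((k+1) mod n)} \<in> E"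
proof -
  define s where "s = 2 * sin (pi / real n)"
  have s0: "0 < s" using sin_pi_n_pos[OF n] by (simp add: s_def)
  have g: "graph_on P E" using sp by (simp add: t_spanner_def)
  have sep: "\<forall>x\<in>P. \<forall>y\<in>P. x \<noteq> y \<longrightarrow> s \<le> dist x y"
  proof (intro ballI impI)
    fix x y assume "x \<in> P" "y \<in> P" "x \<noteq> y"
    then obtain i j where ij: "i < n" "j < n" "x = p i" "y = p j" using P by auto
    then have "i \<noteq> j" using \<open>x \<noteq> y\<close> by auto
    then show "s \<le> dist x y" using ij abs_sin_diff_ge[of i n j] dist_pk[of th i n j] unfolding s_def p by simp
  qed
  define a where "a = p k"
  define b where "b = p ((k+1) mod n)"
  have aP: "a \<in> P" "b \<in> P" using k n unfolding a_def b_def P by auto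
  have dab: "dist a b \<le> s" unfolding a_def b_def p s_def using adj_dist[OF k n] .
  have ab: "a \<noteq> b"
  proof
    assume "a = b"
    have "(k+1) mod n \<noteq> k"
    proof (cases "k+1 < n")
      case False
      then have "k + 1 = n" using k by simp
      then show ?thesis using n by auto
    qed simp
    then have "s \<le> dist (p k) (p ((k+1) mod n))" using k n
      using abs_sin_diff_ge[of k n "(k+1) mod n"] dist_pk[of th k n "(k+1) mod n"] unfolding s_def p by simp
    then show False using \<open>a = b\<close> s0 unfolding a_def b_def by simp
  qed
  obtain ps where ps: "is_walk E a b ps" "walk_length ps \<le> t * dist a b"
    using sp aP ab unfolding t_spanner_def by blast
  have d0: "0 < dist a b" using ab by simp
  have "t * dist a b < 2 * dist a b" using t d0 by simp
  then have "t * dist a b < 2 * s" using dab by linarith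
  moreover have lb: "real (length ps - 1) * s \<le> walk_length ps" using walk_lb[OF g sep ps(1)] .
  ultimately have "real (length ps - 1) * s < 2 * s" using ps(2) by linarith
  then have "real (length ps - 1) < 2" using s0 by (simp add: mult_less_cancel_right)
  then have l2: "length ps \<le> 2" by linarith
  have "ps \<noteq> []" "hd ps = a" "last ps = b" using ps(1) by (auto simp: is_walk_def)
  have "length ps \<noteq> 0" using \<open>ps \<noteq> []\<close> by simp
  moreover have "length ps \<noteq> 1"
  proof
    assume "length ps = 1"
    then obtain x where "ps = [x]" by (metis length_0_conv length_Suc_conv One_nat_def)
    then show False using \<open>hd ps = a\<close> \<open>last ps = b\<close> ab by simp
  qed
  ultimately have "length ps = 2" using l2 by linarith
  then obtain x y where xy: "ps = [x,y]" by (metis length_0_conv length_Suc_conv numeral_2_eq_2)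
  have "{ps!0, ps!Suc 0} \<in> E" using ps(1) \<open>length ps = 2\<close> unfolding is_walk_def by simp
  then have "{x, y} \<in> E" using xy by simp
  moreover have "x = a" "y = b" using xy \<open>hd ps = a\<close> \<open>last ps = b\<close> by auto
  ultimately show ?thesis unfolding a_def b_def by simp
qed

lemma Lf_p:
  "Lf (cis (th + 2*pi*real (0::nat)/real n)) (cis (th + 2*pi*real j/real n)) (cis (th + 2*pi*real k/real n))
   = 4 * sin (pi*(real k - real j)/real n) * sin (pi*real j/real n) * sin (pi*real k/real n)"
proof -
  define x where "x = 2*pi*(real k - real j)/real n"
  define y where "y = 2*pi*real j/real n"
  have 1: "(th + 2*pi*real k/real n) - (th + 2*pi*real j/real n) = x"
    by (cases "n=0") (simp_all add: x_def field_simps)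
  have 2: "(th + 2*pi*real j/real n) - (th + 2*pi*real (0::nat)/real n) = y" by (simp add: y_def)
  have 3: "(th + 2*pi*real k/real n) - (th + 2*pi*real (0::nat)/real n) = x + y"
    by (cases "n=0") (simp_all add: x_def y_def field_simps)
  have "Lf (cis (th + 2*pi*real (0::nat)/real n)) (cis (th + 2*pi*real j/real n)) (cis (th + 2*pi*real k/real n))
      = sin x + sin y - sin (x + y)" unfolding Lf_cis 1 2 3 ..
  also have "\<dots> = 4 * sin (x/2) * sin (y/2) * sin ((x+y)/2)" by (rule trig_id)
  also have "x/2 = pi*(real k - real j)/real n" by (simp add: x_def)
  also have "y/2 = pi*real j/real n" by (simp add: y_def)
  also have "(x+y)/2 = pi*real k/real n"
    by (cases "n=0") (simp_all add: x_def y_def field_simps)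
  finally show ?thesis by simp
qed

lemma sign_cases:
  assumes "0 < j" "j < n" "k < n"
  defines "L \<equiv> 4 * sin (pi*(real k - real j)/real n) * sin (pi*real j/real n) * sin (pi*real k/real n)"
  shows "(k = 0 \<or> k = j) \<longrightarrow> L = 0" "0 < k \<and> k < j \<longrightarrow> L < 0" "j < k \<longrightarrow> 0 < L"
proof -
  have sj: "0 < sin (pi*real j/real n)" using assms by (intro sin_pos_frac) auto
  show "(k = 0 \<or> k = j) \<longrightarrow> L = 0" unfolding L_def by auto
  show "0 < k \<and> k < j \<longrightarrow> L < 0"
  proof
    assume k: "0 < k \<and> k < j"
    have sk: "0 < sin (pi*real k/real n)" using assms k by (intro sin_pos_frac) auto
    have e: "pi*(real k - real j)/real n = - (pi * real (j - k) / real n)"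
      using k by (cases "n = 0") (simp_all add: of_nat_diff field_simps)
    have "0 < sin (pi * real (j - k) / real n)" using assms k by (intro sin_pos_frac) auto
    then have "sin (pi*(real k - real j)/real n) < 0" unfolding e by simp
    then show "L < 0" unfolding L_def using sj sk by (simp add: mult_neg_pos mult_pos_pos)
  qed
  show "j < k \<longrightarrow> 0 < L"
  proof
    assume k: "j < k"
    have sk: "0 < sin (pi*real k/real n)" using assms k by (intro sin_pos_frac) auto
    have e: "pi*(real k - real j)/real n = pi * real (k - j) / real n"
      using k by (simp add: of_nat_diff)
    have "0 < sin (pi * real (k - j) / real n)" using assms k by (intro sin_pos_frac) auto
    then have "0 < sin (pi*(real k - real j)/real n)" unfolding e by simp
    then show "0 < L" unfolding L_def using sj sk by simp
  qed
qed

lemma cis_period: "cis (A + 2*pi*real (m::nat)) = cis A"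
proof -
  have "cis (2*pi*real m) = 1" by (rule cis_multiple_2pi) simp
  then show ?thesis by (metis cis_mult mult_1_right)
qed

lemma cis_shift:
  assumes "0 < n"
  shows "cis ((th + 2*pi*real i/real n) + 2*pi*real k/real n) = cis (th + 2*pi*real ((i+k) mod n)/real n)"
proof -
  have r: "real (i + k) = real ((i+k) mod n) + real n * real ((i+k) div n)"
    by (metis of_nat_add of_nat_mult mod_mult_div_eq add.commute mult.commute)
  have "(th + 2*pi*real i/real n) + 2*pi*real k/real n = th + 2*pi*real (i+k)/real n"
    using assms by (simp add: field_simps)
  also have "\<dots> = (th + 2*pi*real ((i+k) mod n)/real n) + 2*pi*real ((i+k) div n)"
    unfolding r using assms by (simp add: field_simps)
  finally have e: "(th + 2*pi*real i/real n) + 2*pi*real k/real n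
      = (th + 2*pi*real ((i+k) mod n)/real n) + 2*pi*real ((i+k) div n)" .
  show ?thesis unfolding e by (rule cis_period)
qed

lemma rot:
  assumes "i < n"
  shows "(\<lambda>k. cis ((th + 2*pi*real i/real n) + 2*pi*real k/real n)) ` {..<n}
       = (\<lambda>k. cis (th + 2*pi*real k/real n)) ` {..<n}"
proof -
  have n: "0 < n" using assms by simp
  show ?thesis
  proof (intro set_eqI iffI)
    fix x assume "x \<in> (\<lambda>k. cis ((th + 2*pi*real i/real n) + 2*pi*real k/real n)) ` {..<n}"
    then obtain k where "k < n" "x = cis ((th + 2*pi*real i/real n) + 2*pi*real k/real n)" by auto
    then have "x = cis (th + 2*pi*real ((i+k) mod n)/real n)" using cis_shift[OF n] by simp
    moreover have "(i+k) mod n < n" using n by simp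
    ultimately show "x \<in> (\<lambda>k. cis (th + 2*pi*real k/real n)) ` {..<n}" by auto
  next
    fix x assume "x \<in> (\<lambda>k. cis (th + 2*pi*real k/real n)) ` {..<n}"
    then obtain k where k: "k < n" "x = cis (th + 2*pi*real k/real n)" by auto
    define m where "m = (k + n - i) mod n"
    have "(i + m) mod n = (i + (k + n - i)) mod n" unfolding m_def by (simp add: mod_add_right_eq)
    also have "i + (k + n - i) = k + n" using assms by simp
    also have "(k + n) mod n = k" using k by simp
    finally have "x = cis ((th + 2*pi*real i/real n) + 2*pi*real m/real n)"
      using cis_shift[OF n, of th i m] k by simp
    moreover have "m < n" unfolding m_def using n by simp
    ultimately show "x \<in> (\<lambda>k. cis ((th + 2*pi*real i/real n) + 2*pi*real k/real n)) ` {..<n}" by auto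
  qed
qed

lemma Lf_seg1:
  assumes "z \<in> closed_segment a b"
  shows "Lf a b z = 0"
proof -
  obtain u where z: "z = (1 - u) *\<^sub>R a + u *\<^sub>R b" using assms unfolding closed_segment_def by blast
  show ?thesis unfolding z Lf_def by (simp add: scaleR_conv_of_real algebra_simps)
qed

lemma Lf_seg2:
  "Lf a b ((1 - v) *\<^sub>R c + v *\<^sub>R d) = (1 - v) * Lf a b c + v * Lf a b d"
  unfolding Lf_def by (simp add: scaleR_conv_of_real algebra_simps)

lemma p_inj:
  assumes "2 \<le> n"
  shows "inj_on (\<lambda>k. cis (th + 2*pi*real k/real n)) {..<n}"
proof (rule inj_onI)
  fix i j assume ij: "i \<in> {..<n}" "j \<in> {..<n}"
    and e: "cis (th + 2*pi*real i/real n) = cis (th + 2*pi*real j/real n)"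
  show "i = j"
  proof (rule ccontr)
    assume "i \<noteq> j"
    then have "sin (pi / real n) \<le> \<bar>sin (pi * (real i - real j) / real n)\<bar>"
      using ij by (intro abs_sin_diff_ge) auto
    moreover have "dist (cis (th + 2*pi*real i/real n)) (cis (th + 2*pi*real j/real n)) = 0"
      using e by simp
    ultimately show False using sin_pi_n_pos[OF assms] unfolding dist_pk by simp
  qed
qed

lemma interval_conn:
  fixes p :: "nat \<Rightarrow> 'a"
  assumes cyc: "\<And>m. Suc m < n \<Longrightarrow> {p m, p (Suc m)} \<in> E" and hi: "hi < n"
  shows "ug_connected (p ` {lo..hi}) E"
proof -
  have step: "(p a, p b) \<in> (ur (p ` {lo..hi}) E)\<^sup>*" if "lo \<le> a" "a \<le> b" "b \<le> hi" for a b
    using that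
  proof (induction b)
    case 0
    then show ?case by simp
  next
    case (Suc b)
    show ?case
    proof (cases "a = Suc b")
      case True
      then show ?thesis by simp
    next
      case False
      then have ab: "a \<le> b" using Suc.prems by simp
      have "(p a, p b) \<in> (ur (p ` {lo..hi}) E)\<^sup>*" using Suc.IH ab Suc.prems by simp
      moreover have "(p b, p (Suc b)) \<in> ur (p ` {lo..hi}) E"
        using cyc[of b] Suc.prems ab hi unfolding ur_def by auto
      ultimately show ?thesis by (rule rtrancl_into_rtrancl)
    qed
  qed
  show ?thesis unfolding ugc_def2
  proof (intro ballI)
    fix x y assume "x \<in> p ` {lo..hi}" "y \<in> p ` {lo..hi}"
    then obtain a b where ab: "a \<in> {lo..hi}" "b \<in> {lo..hi}" "x = p a" "y = p b" by auto
    show "(x, y) \<in> (ur (p ` {lo..hi}) E)\<^sup>*"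
    proof (cases "a \<le> b")
      case True
      then show ?thesis using step ab by auto
    next
      case False
      then have "(p b, p a) \<in> (ur (p ` {lo..hi}) E)\<^sup>*" using step ab by auto
      then show ?thesis using ab ur_rtrancl_sym by metis
    qed
  qed
qed

lemma main_core:
  fixes p :: "nat \<Rightarrow> complex"
  assumes p: "p = (\<lambda>k. cis (th + 2*pi*real k/real n))" and P: "P = p ` {..<n}"
    and n: "2 \<le> n" and sp: "t_spanner t P E" and t: "t < 2"
    and idx: "0 < kc" "kc < j" "j < kd" "kd < n"
    and e1: "{p 0, p j} \<in> E" and e2: "{p kc, p kd} \<in> E"
  shows "treewidth P E \<noteq> 2"
proof -
  have cyc: "{p k, p ((k+1) mod n)} \<in> E" if "k < n" for k
    using cycle_edges[OF p P n sp t that] .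
  have cyc': "{p m, p (Suc m)} \<in> E" if "Suc m < n" for m
    using cyc[of m] that by simp
  have cyclast: "{p (n - 1), p 0} \<in> E"
    using cyc[of "n - 1"] n by simp
  have inj: "inj_on p {..<n}" unfolding p using p_inj[OF n] .
  have g: "graph_on P E" using sp by (simp add: t_spanner_def)
  have fP: "finite P" using P by simp
  define X1 where "X1 = p ` {0}"
  define X2 where "X2 = p ` {j}"
  define X3 where "X3 = p ` {1..j-1}"
  define X4 where "X4 = p ` {j+1..n-1}"
  have sub: "X1 \<subseteq> P" "X2 \<subseteq> P" "X3 \<subseteq> P" "X4 \<subseteq> P"
    unfolding X1_def X2_def X3_def X4_def P using idx by auto
  have ne: "X1 \<noteq> {}" "X2 \<noteq> {}" "X3 \<noteq> {}" "X4 \<noteq> {}"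
    unfolding X1_def X2_def X3_def X4_def using idx by auto
  have dimg: "p ` A \<inter> p ` B = {}" if "A \<subseteq> {..<n}" "B \<subseteq> {..<n}" "A \<inter> B = {}" for A B
    using inj_on_image_Int[OF inj that(1,2)] that(3) by simp
  have dis: "X1 \<inter> X2 = {}" "X1 \<inter> X3 = {}" "X1 \<inter> X4 = {}" "X2 \<inter> X3 = {}"
      "X2 \<inter> X4 = {}" "X3 \<inter> X4 = {}"
    unfolding X1_def X2_def X3_def X4_def using idx by (intro dimg; auto)+
  have con: "ug_connected X1 E" "ug_connected X2 E" "ug_connected X3 E" "ug_connected X4 E"
    unfolding X1_def X2_def X3_def X4_def
    using interval_conn[of n p E, OF cyc'] idx by (auto simp: ug_connected_def)
  have adj: "\<exists>u\<in>X1. \<exists>v\<in>X2. {u,v} \<in> E" "\<exists>u\<in>X1. \<exists>v\<in>X3. {u,v} \<in> E"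
      "\<exists>u\<in>X1. \<exists>v\<in>X4. {u,v} \<in> E" "\<exists>u\<in>X2. \<exists>v\<in>X3. {u,v} \<in> E"
      "\<exists>u\<in>X2. \<exists>v\<in>X4. {u,v} \<in> E" "\<exists>u\<in>X3. \<exists>v\<in>X4. {u,v} \<in> E"
  proof -
    show "\<exists>u\<in>X1. \<exists>v\<in>X2. {u,v} \<in> E" unfolding X1_def X2_def using e1 by auto
    show "\<exists>u\<in>X1. \<exists>v\<in>X3. {u,v} \<in> E" unfolding X1_def X3_def
      using cyc'[of 0] idx by (intro bexI[of _ "p 0"] bexI[of _ "p 1"]) auto
    show "\<exists>u\<in>X1. \<exists>v\<in>X4. {u,v} \<in> E" unfolding X1_def X4_def
      using cyclast idx by (intro bexI[of _ "p 0"] bexI[of _ "p (n - 1)"]) (auto simp: insert_commute)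
    show "\<exists>u\<in>X2. \<exists>v\<in>X3. {u,v} \<in> E" unfolding X2_def X3_def
      using cyc'[of "j - 1"] idx by (intro bexI[of _ "p j"] bexI[of _ "p (j - 1)"]) (auto simp: insert_commute)
    show "\<exists>u\<in>X2. \<exists>v\<in>X4. {u,v} \<in> E" unfolding X2_def X4_def
      using cyc'[of j] idx by (intro bexI[of _ "p j"] bexI[of _ "p (Suc j)"]) auto
    show "\<exists>u\<in>X3. \<exists>v\<in>X4. {u,v} \<in> E" unfolding X3_def X4_def
      using e2 idx by (intro bexI[of _ "p kc"] bexI[of _ "p kd"]) auto
  qed
  show ?thesis
  proof (rule tw_ge3[OF fP g])
    fix I TE B assume "tree_decomposition P E I TE B"
    then show "\<exists>i\<in>I. 4 \<le> card (B i)"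
      using K4_bag[OF fP _ sub ne dis con adj] by blast
  qed
qed

theorem lemma27:
  fixes n :: nat and \<theta> t :: real and P :: "complex set" and E :: "complex set set"
  assumes "n \<ge> 3"
    and "P = {cis (\<theta> + 2 * pi * real k / real n) | k. k < n}"
    and "t_spanner t P E"
    and "t < 2"
    and "treewidth P E = 2"
  shows "plane E"
proof (rule ccontr)
  assume np: "\<not> plane E"
  have n2: "2 \<le> n" using assms(1) by simp
  define p where "p = (\<lambda>k::nat. cis (\<theta> + 2*pi*real k/real n))"
  have P: "P = p ` {..<n}" using assms(2) unfolding p_def by auto
  have g: "graph_on P E" using assms(3) by (simp add: t_spanner_def)
  obtain a b c d where ab: "{a,b} \<in> E" and cd: "{c,d} \<in> E" and ne: "{a,b} \<noteq> {c,d}"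
    and ns: "\<not> (closed_segment a b \<inter> closed_segment c d \<subseteq> {a,b} \<inter> {c,d})"
    using np unfolding plane_def by blast
  obtain z where z1: "z \<in> closed_segment a b" and z2: "z \<in> closed_segment c d"
    and z3: "z \<notin> {a,b} \<inter> {c,d}" using ns by blast
  have abP: "a \<in> P" "b \<in> P" "c \<in> P" "d \<in> P" using g ab cd unfolding graph_on_def by auto
  have anb: "a \<noteq> b" using graph_on_neq[OF g ab] .
  have cnd: "c \<noteq> d" using graph_on_neq[OF g cd] .
  obtain i where i: "i < n" "a = p i" using abP P by auto
  define th' where "th' = \<theta> + 2*pi*real i/real n"
  define q where "q = (\<lambda>k::nat. cis (th' + 2*pi*real k/real n))"
  have Q: "P = q ` {..<n}" unfolding P p_def q_def th'_def using rot[OF i(1)] by simp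
  have aq: "a = q 0" unfolding i(2) p_def q_def th'_def by simp
  have spq: "t_spanner t (q ` {..<n}) E" using assms(3) Q by simp
  obtain j where j: "j < n" "b = q j" using abP Q by auto
  have j0: "0 < j" using anb aq j by (cases "j = 0") auto
  obtain kc where kc: "kc < n" "c = q kc" using abP Q by auto
  obtain kd where kd: "kd < n" "d = q kd" using abP Q by auto
  have injq: "inj_on q {..<n}" unfolding q_def using p_inj[OF n2] .
  define L where "L x = Lf a b x" for x
  have Lq: "L (q k) = 4 * sin (pi*(real k - real j)/real n) * sin (pi*real j/real n) * sin (pi*real k/real n)"
    for k unfolding L_def aq j(2) q_def using Lf_p[of th' n j k] by simp
  have Lz: "L z = 0" unfolding L_def using Lf_seg1[OF z1] .
  obtain v where v: "0 \<le> v" "v \<le> 1" "z = (1 - v) *\<^sub>R c + v *\<^sub>R d"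
    using z2 unfolding closed_segment_def by blast
  have Lcomb: "(1 - v) * L c + v * L d = 0" using Lz unfolding L_def v(3) Lf_seg2 .
  note sc = sign_cases[OF j0 j(1)]
  have qeq: "q x = q y \<longleftrightarrow> x = y" if "x < n" "y < n" for x y
    using injq that by (meson inj_on_eq_iff lessThan_iff)
  have Lzero: "L (q k) = 0 \<longleftrightarrow> (k = 0 \<or> k = j)" if "k < n" for k
  proof
    assume "L (q k) = 0"
    then show "k = 0 \<or> k = j" using sc[OF that] unfolding Lq by (cases "k < j"; cases "j < k") auto
  next
    assume "k = 0 \<or> k = j"
    then show "L (q k) = 0" using sc[OF that] unfolding Lq by auto
  qed
  have tw: "treewidth P E \<noteq> 2"
  proof (cases "kc = 0 \<or> kc = j")
    case True
    then have "c = a \<or> c = b" using kc aq j by auto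
    then have dab: "d \<noteq> a" "d \<noteq> b" using ne cnd by auto
    have "kd \<noteq> 0"
    proof
      assume "kd = 0" then show False using dab kd(2) aq by simp
    qed
    moreover have "kd \<noteq> j"
    proof
      assume "kd = j" then show False using dab kd(2) j(2) by simp
    qed
    ultimately have "kd \<noteq> 0 \<and> kd \<noteq> j" by simp
    then have "L d \<noteq> 0" using Lzero[OF kd(1)] kd(2) by simp
    moreover have "L c = 0" using Lzero[OF kc(1)] kc(2) True by simp
    ultimately have "v = 0" using Lcomb by simp
    then have "z = c" using v(3) by simp
    then show ?thesis using z3 \<open>c = a \<or> c = b\<close> by auto
  next
    case False
    note kcF = False
    show ?thesis
    proof (cases "kd = 0 \<or> kd = j")
      case True
      then have "d = a \<or> d = b" using kd aq j by auto
      then have "c \<noteq> a" "c \<noteq> b" using ne cnd by auto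
      have "L c \<noteq> 0" using Lzero[OF kc(1)] kc(2) kcF by simp
      moreover have "L d = 0" using Lzero[OF kd(1)] kd(2) True by simp
      ultimately have "v = 1" using Lcomb by simp
      then have "z = d" using v(3) by simp
      then show ?thesis using z3 \<open>d = a \<or> d = b\<close> by auto
    next
      case False
      have c1: "0 < kc \<and> kc < j \<or> j < kc" using kcF by auto
      have d1: "0 < kd \<and> kd < j \<or> j < kd" using False by auto
      have Lc: "L c < 0 \<or> 0 < L c" using c1 sc[OF kc(1)] unfolding kc(2) Lq by auto
      have Ld: "L d < 0 \<or> 0 < L d" using d1 sc[OF kd(1)] unfolding kd(2) Lq by auto
      have opp: "(L c < 0 \<and> 0 < L d) \<or> (0 < L c \<and> L d < 0)"
      proof (rule ccontr)
        assume "\<not> ?thesis"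
        then have "(L c < 0 \<and> L d < 0) \<or> (0 < L c \<and> 0 < L d)" using Lc Ld by auto
        moreover have "(1 - v) * L c \<le> 0 \<and> v * L d \<le> 0 \<or> 0 \<le> (1 - v) * L c \<and> 0 \<le> v * L d"
          using calculation v(1,2) by (auto intro: mult_nonneg_nonpos mult_nonneg_nonneg)
        ultimately show False using Lcomb v(1,2)
          by (smt (verit) mult_eq_0_iff)
      qed
      then show ?thesis
      proof
        assume h: "L c < 0 \<and> 0 < L d"
        then have "0 < kc" "kc < j" "j < kd"
          using c1 d1 sc[OF kc(1)] sc[OF kd(1)] unfolding kc(2) kd(2) Lq by auto
        moreover have "{q 0, q j} \<in> E" using ab aq j by simp
        moreover have "{q kc, q kd} \<in> E" using cd kc kd by simp
        ultimately show ?thesis using main_core[OF q_def Q n2 spq[folded Q] assms(4)] kd(1) by blast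
      next
        assume h: "0 < L c \<and> L d < 0"
        then have "0 < kd" "kd < j" "j < kc"
          using c1 d1 sc[OF kc(1)] sc[OF kd(1)] unfolding kc(2) kd(2) Lq by auto
        moreover have "{q 0, q j} \<in> E" using ab aq j by simp
        moreover have "{q kd, q kc} \<in> E" using cd kc kd by (simp add: insert_commute)
        ultimately show ?thesis using main_core[OF q_def Q n2 spq[folded Q] assms(4)] kc(1) by blast
      qed
    qed
  qed
  then show False using assms(5) by simp
qed

end
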